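(* Let $m>n$ be positive integers. (a) For every $\lambda\in X$, $x(\lambda)$ lies in the $\mathfrak T_{iso}$-orbit $\mathcal O$ of $\Lambda_0$. (b) For every $k\in\mathbb Z$, $\Lambda_0+kn\,\mathbf m\in\mathcal O$, where $\mathbf m=(m,\dots,m|m,\dots,m)$.
   Context: $X$ is the set of partitions $\lambda=(\lambda_1\ge\dots\ge\lambda_n\ge0)$ with $\lambda_1\le m$; $\lambda'_j=\#\{i:\lambda_i\ge j\}$. For $\lambda\in X$, $x(\lambda)=(a_1,\dots,a_n|b_1,\dots,b_m)\in\mathbb Z^{n|m}$ with $a_i=m(n-i)+n\lambda_{n+1-i}$, $b_j=n(j-1)+m\lambda'_j$; $\Lambda_0=x(\emptyset)=(m(n-1),\dots,m,0|0,n,\dots,n(m-1))$. For $\alpha=\epsilon_i-\delta_j$: $\Pi_\alpha=\{a_i=b_j\}$, $\Pi_{-\alpha}=\{a_i-b_j=n-m\}$, $\tau_\alpha:\Pi_\alpha\to\Pi_{-\alpha}$ adds $n$ to $a_i$ and $m$ to $b_j$, $\tau_{-\alpha}=\tau_\alpha^{-1}$. $\mathcal O$ is the set of elements obtained from $\Lambda_0$ by finite sequences of maps $\tau_{\pm\alpha}$, each applied on its domain. *)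

theory Defs
  imports Main
begin

text \<open>An element of Z^{n|m} is a pair (a, b) of integer sequences; only the
coordinates a 1..a n and b 1..b m are meaningful. All vectors considered here
have coordinates 0 outside these index ranges, and the maps tau only change
coordinates inside the ranges.\<close>

type_synonym supvec = "(nat \<Rightarrow> int) \<times> (nat \<Rightarrow> int)"

definition isX :: "nat \<Rightarrow> nat \<Rightarrow> (nat \<Rightarrow> nat) \<Rightarrow> bool" where
  "isX n m lam \<longleftrightarrow> (\<forall>i j. 1 \<le> i \<and> i \<le> j \<and> j \<le> n \<longrightarrow> lam j \<le> lam i)
                   \<and> (\<forall>i. 1 \<le> i \<and> i \<le> n \<longrightarrow> lam i \<le> m)"

definition conjp :: "nat \<Rightarrow> (nat \<Rightarrow> nat) \<Rightarrow> nat \<Rightarrow> nat" where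
  "conjp n lam j = card {i \<in> {1..n}. j \<le> lam i}"

definition xlam :: "nat \<Rightarrow> nat \<Rightarrow> (nat \<Rightarrow> nat) \<Rightarrow> supvec" where
  "xlam n m lam =
    ((\<lambda>i. if 1 \<le> i \<and> i \<le> n
          then int m * (int n - int i) + int n * int (lam (n + 1 - i)) else 0),
     (\<lambda>j. if 1 \<le> j \<and> j \<le> m
          then int n * (int j - 1) + int m * int (conjp n lam j) else 0))"

definition Lambda0 :: "nat \<Rightarrow> nat \<Rightarrow> supvec" where
  "Lambda0 n m =
    ((\<lambda>i. if 1 \<le> i \<and> i \<le> n then int m * (int n - int i) else 0),
     (\<lambda>j. if 1 \<le> j \<and> j \<le> m then int n * (int j - 1) else 0))"

text \<open>tau_alpha for alpha = eps_i - delta_j: adds n to a_i and m to b_j;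
its inverse tau_{-alpha} subtracts them.\<close>
definition tau_plus :: "nat \<Rightarrow> nat \<Rightarrow> nat \<Rightarrow> nat \<Rightarrow> supvec \<Rightarrow> supvec" where
  "tau_plus n m i j x = ((fst x)(i := fst x i + int n), (snd x)(j := snd x j + int m))"

definition tau_minus :: "nat \<Rightarrow> nat \<Rightarrow> nat \<Rightarrow> nat \<Rightarrow> supvec \<Rightarrow> supvec" where
  "tau_minus n m i j x = ((fst x)(i := fst x i - int n), (snd x)(j := snd x j - int m))"

inductive_set orbit :: "nat \<Rightarrow> nat \<Rightarrow> supvec set" for n m where
  base: "Lambda0 n m \<in> orbit n m"
| plus: "\<lbrakk>x \<in> orbit n m; 1 \<le> i; i \<le> n; 1 \<le> j; j \<le> m; fst x i = snd x j\<rbrakk>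
          \<Longrightarrow> tau_plus n m i j x \<in> orbit n m"
| minus: "\<lbrakk>x \<in> orbit n m; 1 \<le> i; i \<le> n; 1 \<le> j; j \<le> m;
           fst x i - snd x j = int n - int m\<rbrakk>
          \<Longrightarrow> tau_minus n m i j x \<in> orbit n m"

definition shiftL :: "nat \<Rightarrow> nat \<Rightarrow> int \<Rightarrow> supvec" where
  "shiftL n m k =
    ((\<lambda>i. if 1 \<le> i \<and> i \<le> n then fst (Lambda0 n m) i + k * int n * int m else 0),
     (\<lambda>j. if 1 \<le> j \<and> j \<le> m then snd (Lambda0 n m) j + k * int n * int m else 0))"

end

theory Submission
  imports Defs
begin

inductive reach :: "nat \<Rightarrow> nat \<Rightarrow> supvec \<Rightarrow> supvec \<Rightarrow> bool" for n m where
  rrefl: "reach n m x x"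
| rplus: "\<lbrakk>reach n m x y; 1 \<le> i; i \<le> n; 1 \<le> j; j \<le> m; fst y i = snd y j\<rbrakk>
          \<Longrightarrow> reach n m x (tau_plus n m i j y)"
| rminus: "\<lbrakk>reach n m x y; 1 \<le> i; i \<le> n; 1 \<le> j; j \<le> m;
           fst y i - snd y j = int n - int m\<rbrakk>
          \<Longrightarrow> reach n m x (tau_minus n m i j y)"

lemma orbit_reach: "y \<in> orbit n m \<Longrightarrow> reach n m (Lambda0 n m) y"
  by (induction rule: orbit.induct) (auto intro: reach.intros)

lemma reach_orbit: "reach n m x y \<Longrightarrow> x = Lambda0 n m \<Longrightarrow> y \<in> orbit n m"
  by (induction rule: reach.induct) (auto intro: orbit.intros)

lemma reach_trans: "reach n m y z \<Longrightarrow> reach n m x y \<Longrightarrow> reach n m x z"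
  by (induction rule: reach.induct) (auto intro: reach.intros)

lemma reach_sym: "reach n m x y \<Longrightarrow> reach n m y x"
proof (induction rule: reach.induct)
  case (rrefl x) then show ?case by (rule reach.rrefl)
next
  case (rplus x y i j)
  let ?z = "tau_plus n m i j y"
  have "tau_minus n m i j ?z = y"
    by (auto simp: tau_plus_def tau_minus_def)
  moreover have "reach n m ?z (tau_minus n m i j ?z)"
    using rplus by (intro reach.rminus[OF reach.rrefl]) (auto simp: tau_plus_def)
  ultimately show ?case using rplus reach_trans by metis
next
  case (rminus x y i j)
  let ?z = "tau_minus n m i j y"
  have "tau_plus n m i j ?z = y"
    by (auto simp: tau_plus_def tau_minus_def)
  moreover have "reach n m ?z (tau_plus n m i j ?z)"
    using rminus by (intro reach.rplus[OF reach.rrefl]) (auto simp: tau_minus_def)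
  ultimately show ?case using rminus reach_trans by metis
qed

definition sh :: "nat \<Rightarrow> nat \<Rightarrow> int \<Rightarrow> supvec \<Rightarrow> supvec" where
  "sh n m c x = ((\<lambda>i. if 1 \<le> i \<and> i \<le> n then fst x i + c else fst x i),
                 (\<lambda>j. if 1 \<le> j \<and> j \<le> m then snd x j + c else snd x j))"

lemma reach_sh: "reach n m x y \<Longrightarrow> reach n m (sh n m c x) (sh n m c y)"
proof (induction rule: reach.induct)
  case (rrefl x) then show ?case by (rule reach.rrefl)
next
  case (rplus x y i j)
  have "sh n m c (tau_plus n m i j y) = tau_plus n m i j (sh n m c y)"
    using rplus by (auto simp: sh_def tau_plus_def)
  moreover have "reach n m (sh n m c x) (tau_plus n m i j (sh n m c y))"
    using rplus by (intro reach.rplus) (auto simp: sh_def)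
  ultimately show ?case by simp
next
  case (rminus x y i j)
  have "sh n m c (tau_minus n m i j y) = tau_minus n m i j (sh n m c y)"
    using rminus by (auto simp: sh_def tau_minus_def)
  moreover have "reach n m (sh n m c x) (tau_minus n m i j (sh n m c y))"
    using rminus by (intro reach.rminus) (auto simp: sh_def)
  ultimately show ?case by simp
qed

lemma sh_add: "sh n m c (sh n m d x) = sh n m (d + c) x"
  by (auto simp: sh_def)

lemma sh_0: "sh n m 0 x = x"
  by (simp add: sh_def prod_eq_iff fun_eq_iff)

lemma shiftL_sh: "shiftL n m k = sh n m (k * int n * int m) (Lambda0 n m)"
  by (auto simp: shiftL_def sh_def Lambda0_def)

lemma conjp_cong: "(\<And>i. 1 \<le> i \<Longrightarrow> i \<le> n \<Longrightarrow> lam i = mu i) \<Longrightarrow> conjp n lam j = conjp n mu j"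
  unfolding conjp_def by (rule arg_cong[where f=card]) auto

lemma base0:
  assumes "(\<Sum>i=1..n. lam i) = (0::nat)"
  shows "xlam n m lam = Lambda0 n m"
proof -
  have z: "\<And>i. 1 \<le> i \<Longrightarrow> i \<le> n \<Longrightarrow> lam i = 0" using assms by simp
  have cz: "conjp n lam j = 0" if "1 \<le> j" for j
  proof -
    have "{i \<in> {1..n}. j \<le> lam i} = {}" using z that by fastforce
    then show ?thesis by (simp add: conjp_def)
  qed
  have z': "\<And>i. 1 \<le> i \<Longrightarrow> i \<le> n \<Longrightarrow> lam (n+1-i) = 0" using z by simp
  have f: "fst (xlam n m lam) i = fst (Lambda0 n m) i" for i
    using z'[of i] by (simp add: xlam_def Lambda0_def)
  have s: "snd (xlam n m lam) j = snd (Lambda0 n m) j" for j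
    using cz[of j] by (simp add: xlam_def Lambda0_def)
  show ?thesis
    using f s by (simp add: prod_eq_iff fun_eq_iff)
qed

lemma step_a:
  assumes "isX n m lam" "(\<Sum>i=1..n. lam i) = Suc N"
    and IHa: "\<And>mu. isX n m mu \<Longrightarrow> (\<Sum>i=1..n. mu i) = N \<Longrightarrow> reach n m (Lambda0 n m) (xlam n m mu)"
  shows "reach n m (Lambda0 n m) (xlam n m lam)"
proof -
  define S where "S = {i\<in>{1..n}. 0 < lam i}"
  have fS: "finite S" by (simp add: S_def)
  have neS: "S \<noteq> {}"
  proof
    assume "S = {}"
    then have "\<And>i. i \<in> {1..n} \<Longrightarrow> lam i = 0" by (auto simp: S_def)
    then have "(\<Sum>i=1..n. lam i) = 0" by simp
    with assms show False by simp
  qed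
  define r where "r = Max S"
  have rS: "r \<in> S" using fS neS r_def Max_in by blast
  have rmax: "lam i = 0" if "i \<in> {1..n}" "r < i" for i
  proof (rule ccontr)
    assume "lam i \<noteq> 0"
    then have "i \<in> S" using that by (simp add: S_def)
    then have "i \<le> r" unfolding r_def by (rule Max_ge[OF fS])
    then show False using that by simp
  qed
  have r1: "1 \<le> r" "r \<le> n" "0 < lam r" using rS by (auto simp: S_def)
  define c where "c = lam r"
  have cm: "c \<le> m" using assms(1) r1 by (auto simp: isX_def c_def)
  define mu where "mu = lam(r := c - 1)"
  have Xmu: "isX n m mu"
    unfolding isX_def
  proof (intro conjI allI impI)
    fix i j assume h: "1 \<le> i \<and> i \<le> j \<and> j \<le> n"
    have mono: "lam j \<le> lam i" using assms(1) h unfolding isX_def by blast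
    show "mu j \<le> mu i"
    proof (cases "j = r")
      case True
      then show ?thesis using mono by (auto simp: mu_def c_def)
    next
      case False
      show ?thesis
      proof (cases "i = r")
        case True
        with False h have "r < j" by simp
        then have "lam j = 0" using rmax h by simp
        then show ?thesis using False True by (simp add: mu_def)
      next
        case False2: False
        then show ?thesis using False mono by (simp add: mu_def)
      qed
    qed
  next
    fix i assume h: "1 \<le> i \<and> i \<le> n"
    have "lam i \<le> m" using assms(1) h unfolding isX_def by blast
    then show "mu i \<le> m" using cm by (auto simp: mu_def c_def)
  qed
  have "(\<Sum>i=1..n. lam i) = (\<Sum>i=1..n. mu i) + 1"
  proof -
    have "(\<Sum>i=1..n. lam i) = lam r + (\<Sum>i\<in>{1..n}-{r}. lam i)"
      using r1 by (simp add: sum.remove)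
    moreover have "(\<Sum>i=1..n. mu i) = mu r + (\<Sum>i\<in>{1..n}-{r}. mu i)"
      using r1 by (simp add: sum.remove)
    moreover have "(\<Sum>i\<in>{1..n}-{r}. mu i) = (\<Sum>i\<in>{1..n}-{r}. lam i)"
      by (rule sum.cong) (auto simp: mu_def)
    ultimately show ?thesis using r1 by (simp add: mu_def c_def)
  qed
  with assms have "(\<Sum>i=1..n. mu i) = N" by simp
  with Xmu IHa have IH: "reach n m (Lambda0 n m) (xlam n m mu)" by blast
  have cmu: "conjp n mu c = r - 1"
  proof -
    have "{i \<in> {1..n}. c \<le> mu i} = {1..r-1}"
    proof (rule set_eqI, rule iffI)
      fix i assume "i \<in> {i \<in> {1..n}. c \<le> mu i}"
      then have "1 \<le> i" "i \<le> n" "c \<le> mu i" by auto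
      moreover have "i \<noteq> r" using r1 \<open>c \<le> mu i\<close> by (auto simp: mu_def c_def)
      moreover have "\<not> r < i" using rmax \<open>c \<le> mu i\<close> r1 \<open>1 \<le> i\<close> \<open>i \<le> n\<close>
        by (auto simp: mu_def c_def)
      ultimately show "i \<in> {1..r-1}" by auto
    next
      fix i assume "i \<in> {1..r-1}"
      then have "1 \<le> i" "i < r" by auto
      then have "lam r \<le> lam i" using assms(1) r1 by (auto simp: isX_def)
      then show "i \<in> {i \<in> {1..n}. c \<le> mu i}" using \<open>1 \<le> i\<close> \<open>i < r\<close> r1
        by (auto simp: mu_def c_def)
    qed
    then show ?thesis by (simp add: conjp_def)
  qed
  have clam: "conjp n lam j = conjp n mu j + (if j = c then 1 else 0)" for j
  proof -
    have A: "{i \<in> {1..n}. j \<le> lam i} = {i \<in> {1..n}. j \<le> mu i} \<union> (if j = c then {r} else {})"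
      using r1 by (auto simp: mu_def c_def)
    have B: "r \<notin> {i \<in> {1..n}. j \<le> mu i} \<or> j \<noteq> c" using r1 by (auto simp: mu_def c_def)
    show ?thesis unfolding conjp_def A using B by auto
  qed
  have eq: "xlam n m lam = tau_plus n m (n + 1 - r) c (xlam n m mu)"
  proof -
    have f: "fst (xlam n m lam) i = fst (tau_plus n m (n + 1 - r) c (xlam n m mu)) i" for i
    proof (cases "1 \<le> i \<and> i \<le> n")
      case True
      show ?thesis
      proof (cases "i = n + 1 - r")
        case True
        then have "n + 1 - i = r" using r1 by simp
        then show ?thesis using True r1 \<open>1 \<le> i \<and> i \<le> n\<close>
          by (simp add: xlam_def tau_plus_def mu_def c_def algebra_simps)
      next
        case False
        then have "n + 1 - i \<noteq> r" using r1 \<open>1 \<le> i \<and> i \<le> n\<close> by auto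
        then show ?thesis using False \<open>1 \<le> i \<and> i \<le> n\<close>
          by (simp add: xlam_def tau_plus_def mu_def)
      qed
    next
      case False
      then have "i \<noteq> n + 1 - r" using r1 by auto
      then show ?thesis using False by (auto simp: xlam_def tau_plus_def)
    qed
    have s: "snd (xlam n m lam) j = snd (tau_plus n m (n + 1 - r) c (xlam n m mu)) j" for j
      using r1 cm by (auto simp: xlam_def tau_plus_def clam c_def algebra_simps)
    show ?thesis using f s by (simp add: prod_eq_iff fun_eq_iff)
  qed
  have cond: "fst (xlam n m mu) (n + 1 - r) = snd (xlam n m mu) c"
  proof -
    have e: "n + 1 - (n + 1 - r) = r" using r1 by simp
    have rg: "1 \<le> n + 1 - r" "n + 1 - r \<le> n" using r1 by auto
    have "fst (xlam n m mu) (n + 1 - r) = int m * (int n - int (n + 1 - r)) + int n * int (mu r)"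
      using rg e by (simp add: xlam_def)
    also have "\<dots> = int m * (int r - 1) + int n * (int c - 1)"
      using r1 by (simp add: mu_def c_def of_nat_diff)
    also have "\<dots> = snd (xlam n m mu) c"
      using r1 cm cmu by (simp add: xlam_def c_def of_nat_diff algebra_simps)
    finally show ?thesis .
  qed
  show ?thesis unfolding eq
    by (rule reach.rplus[OF IH]) (use r1 cm cond in \<open>auto simp: c_def\<close>)
qed

lemma main_a:
  assumes "isX n m lam" "(\<Sum>i=1..n. lam i) = N"
  shows "reach n m (Lambda0 n m) (xlam n m lam)"
  using assms
proof (induction N arbitrary: lam)
  case 0
  show ?case unfolding base0[OF 0(2)] by (rule reach.rrefl)
next
  case (Suc N)
  show ?case by (rule step_a[OF Suc.prems Suc.IH])
qed

theorem corollary4p4: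
  fixes n m :: nat
  assumes "0 < n" and "n < m"
  shows "(\<forall>lam. isX n m lam \<longrightarrow> xlam n m lam \<in> orbit n m)
         \<and> (\<forall>k::int. shiftL n m k \<in> orbit n m)"
proof -
  have A: "\<forall>lam. isX n m lam \<longrightarrow> xlam n m lam \<in> orbit n m"
    using main_a[OF _ refl] reach_orbit[OF _ refl] by blast
  define L where "L = Lambda0 n m"
  define d where "d = int n * int m"
  have full: "xlam n m (\<lambda>_. m) = sh n m d L"
  proof -
    have "\<And>j. 1 \<le> j \<Longrightarrow> j \<le> m \<Longrightarrow> conjp n (\<lambda>_. m) j = n"
    proof -
      have "{i \<in> {1..n}. j \<le> m} = {1..n}" if "j \<le> m" for j using that by auto
      then show "\<And>j. 1 \<le> j \<Longrightarrow> j \<le> m \<Longrightarrow> conjp n (\<lambda>_. m) j = n" by (simp add: conjp_def)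
    qed
    then have s: "snd (xlam n m (\<lambda>_. m)) j = snd (sh n m d L) j" for j
      by (simp add: xlam_def sh_def L_def Lambda0_def d_def mult.commute)
    have f: "fst (xlam n m (\<lambda>_. m)) i = fst (sh n m d L) i" for i
      by (simp add: xlam_def sh_def L_def Lambda0_def d_def)
    show ?thesis using f s by (simp add: prod_eq_iff fun_eq_iff)
  qed
  have Xf: "isX n m (\<lambda>_. m)" by (simp add: isX_def)
  have R1: "reach n m L (sh n m d L)"
    using main_a[OF Xf refl] full unfolding L_def by simp
  have e2: "sh n m (-d) (sh n m d L) = L" by (simp add: sh_add sh_0)
  have R2: "reach n m L (sh n m (-d) L)"
    using reach_sym[OF reach_sh[OF R1, of "-d"]] unfolding e2 .
  have pos: "reach n m L (sh n m (int k * d) L)" for k :: nat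
  proof (induction k)
    case 0 then show ?case by (simp add: sh_0 reach.rrefl)
  next
    case (Suc k)
    have "reach n m (sh n m (int k * d) L) (sh n m (int k * d) (sh n m d L))"
      by (rule reach_sh[OF R1])
    moreover have "sh n m (int k * d) (sh n m d L) = sh n m (int (Suc k) * d) L"
      by (simp add: sh_add algebra_simps)
    ultimately show ?case using reach_trans[OF _ Suc.IH] by simp
  qed
  have neg: "reach n m L (sh n m (- (int k * d)) L)" for k :: nat
  proof (induction k)
    case 0 then show ?case by (simp add: sh_0 reach.rrefl)
  next
    case (Suc k)
    have "reach n m (sh n m (- (int k * d)) L) (sh n m (- (int k * d)) (sh n m (-d) L))"
      by (rule reach_sh[OF R2])
    moreover have "sh n m (- (int k * d)) (sh n m (-d) L) = sh n m (- (int (Suc k) * d)) L"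
      by (simp add: sh_add algebra_simps)
    ultimately show ?case using reach_trans[OF _ Suc.IH] by simp
  qed
  have B: "shiftL n m k \<in> orbit n m" for k :: int
  proof (cases "0 \<le> k")
    case True
    define k' where "k' = nat k"
    have k': "k = int k'" using True by (simp add: k'_def)
    have "shiftL n m k = sh n m (int k' * d) L"
      unfolding shiftL_sh k' L_def d_def by (simp only: mult.assoc mult_minus_left)
    then show ?thesis using reach_orbit[OF pos[of k']] unfolding L_def by simp
  next
    case False
    define k' where "k' = nat (- k)"
    have k': "k = - int k'" using False by (simp add: k'_def)
    have "shiftL n m k = sh n m (- (int k' * d)) L"
      unfolding shiftL_sh k' L_def d_def by (simp only: mult.assoc mult_minus_left)
    then show ?thesis using reach_orbit[OF neg[of k']] unfolding L_def by simp
  qed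
  show ?thesis using A B by blast
qed

end
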